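(* Let $q\in(0,1)$ and let $\{J_n\}_{n\ge1}$ be a sequence of random subsets of $\mathbb Z_{\ge0}$ (nonempty). Define $\eta_n=-\min(J_n)$ and $\phi_{n,x}=\prod_{j\in J_n}\frac{1}{1+q^{x+j}}$ for $n\ge1$, $x\in\mathbb R$. Then $\eta_n,\phi_{n,x}$ satisfy: (1) $0\le\phi_{n,x}\le\phi_{n,y}\le1$ for $x\le y$; (2) for every $\varepsilon>0$ there is $M$ with $\phi_{n,x}<\varepsilon$ whenever $\eta_n-x>M$, uniformly in $n,x$; (3) for every $\varepsilon>0$ there is $M$ with $\phi_{n,x}>1-\varepsilon$ whenever $\eta_n-x<-M$, uniformly in $n,x$; (4) there is $c>0$ independent of $n$ with $\phi_{n,x+1}-\phi_{n,x}\ge c$ whenever $x<\eta_n\le x+1$. Consequently the sequences $\{-\min(J_n)\}_{n\ge1}$ and $\{F_n(x)=\mathbb E\prod_{j\in J_n}(1+q^{x+j})^{-1}\}_{n\ge1}$ are asymptotically equivalent as $n\to\infty$.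
   Context: A sequence $\{\eta_n\}_{n\ge1}$ of real random variables spreads if $\lim_{n\to\infty}\sup_{x\in\mathbb R}\mathrm{Prob}\{x<\eta_n\le x+1\}=0$. A sequence $\{F_n\}_{n\ge1}$ of non-decreasing functions $\mathbb R\to\mathbb R$ spreads if $\lim_{n\to\infty}\sup_{x\in\mathbb R}(F_n(x+1)-F_n(x))=0$. A sequence of real random variables $\{\eta_n\}$ and a sequence of non-decreasing functions $\{F_n\}$ are asymptotically equivalent if (i) $\{\eta_n\}$ spreads if and only if $\{F_n\}$ spreads, and (ii) when both spread, $\lim_{n\to\infty}\sup_{x\in\mathbb R}(\mathrm{Prob}\{\eta_n\le x\}-F_n(x))=0$. *)

theory Defs
  imports "HOL-Probability.Probability"
begin

definition spreads_rv :: "'a measure \<Rightarrow> (nat \<Rightarrow> 'a \<Rightarrow> real) \<Rightarrow> bool" where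
  "spreads_rv M \<eta> \<longleftrightarrow>
     (\<lambda>n. SUP x::real. measure M {\<omega> \<in> space M. x < \<eta> n \<omega> \<and> \<eta> n \<omega> \<le> x + 1}) \<longlonglongrightarrow> 0"

definition spreads_fun :: "(nat \<Rightarrow> real \<Rightarrow> real) \<Rightarrow> bool" where
  "spreads_fun F \<longleftrightarrow> (\<lambda>n. SUP x::real. F n (x + 1) - F n x) \<longlonglongrightarrow> 0"

definition asymp_equiv :: "'a measure \<Rightarrow> (nat \<Rightarrow> 'a \<Rightarrow> real) \<Rightarrow> (nat \<Rightarrow> real \<Rightarrow> real) \<Rightarrow> bool" where
  "asymp_equiv M \<eta> F \<longleftrightarrow>
     (spreads_rv M \<eta> \<longleftrightarrow> spreads_fun F) \<and>
     ((spreads_rv M \<eta> \<and> spreads_fun F) \<longrightarrow>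
        (\<lambda>n. SUP x::real. measure M {\<omega> \<in> space M. \<eta> n \<omega> \<le> x} - F n x) \<longlonglongrightarrow> 0)"

end

theory Submission
  imports Defs
begin


definition gg :: "real \<Rightarrow> nat set \<Rightarrow> real \<Rightarrow> nat \<Rightarrow> real" where
  "gg q J x j = (if j \<in> J then ln (1 + q powr (x + real j)) else 0)"
definition TT :: "real \<Rightarrow> nat set \<Rightarrow> real \<Rightarrow> real" where
  "TT q J x = suminf (\<lambda>j. if j = (LEAST j. j \<in> J) then 0 else gg q J x j)"

context fixes q :: real assumes q0: "0 < q" and q1: "q < 1" begin

lemma qpow: "q powr (x + real j) = q powr x * q ^ j"
  using q0 by (simp add: powr_add powr_realpow)

lemma gg_nonneg: "0 \<le> gg q J x j"
  using q0 by (simp add: gg_def)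

lemma gg_le: "gg q J x j \<le> q powr x * q ^ j"
  using q0 by (auto simp: gg_def qpow[symmetric] intro: ln_add_one_self_le_self)

lemma gg_summable: "summable (gg q J x)"
  apply (rule summable_comparison_test[where g = "\<lambda>j. q powr x * q ^ j"])
  using gg_nonneg gg_le q0 q1 by (auto intro!: summable_mult summable_geometric)

lemma gg_mono: "x \<le> y \<Longrightarrow> gg q J y j \<le> gg q J x j"
proof -
  assume "x \<le> y"
  then have "q powr (y + real j) \<le> q powr (x + real j)" using q0 q1 by (intro powr_mono') auto
  moreover have "0 < 1 + q powr (y + real j)" using q0 by (smt (verit) powr_ge_zero)
  ultimately show ?thesis by (simp add: gg_def)
qed

lemma factor_eq: "(if j \<in> J then 1 / (1 + q powr (x + real j)) else 1) = exp (- gg q J x j)"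
proof -
  have "0 < 1 + q powr (x + real j)" using q0 by (smt (verit) powr_ge_zero)
  then show ?thesis by (simp add: gg_def exp_minus divide_inverse)
qed

lemma prod_eq: "(\<Prod>j. if j \<in> J then 1 / (1 + q powr (x + real j)) else 1) = exp (- suminf (gg q J x))"
proof -
  have "(\<Prod>j. if j \<in> J then 1 / (1 + q powr (x + real j)) else 1) = (\<Prod>j. exp (- gg q J x j))"
    by (simp add: factor_eq)
  also have "\<dots> = exp (suminf (\<lambda>j. - gg q J x j))"
    by (rule prodinf_exp) (intro summable_minus gg_summable)
  also have "\<dots> = exp (- suminf (gg q J x))"
    using gg_summable by (simp add: suminf_minus)
  finally show ?thesis .
qed

lemma TT_summable: "summable (\<lambda>j. if j = (LEAST j. j \<in> J) then 0 else gg q J x j)"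
  apply (rule summable_comparison_test[OF _ gg_summable[of J x]])
  using gg_nonneg by auto

lemma suminf_split:
  assumes "J \<noteq> {}"
  shows "suminf (gg q J x) = ln (1 + q powr (x + real (LEAST j. j \<in> J))) + TT q J x"
proof -
  define m where "m = (LEAST j. j \<in> J)"
  have mJ: "m \<in> J" using assms unfolding m_def by (metis LeastI ex_in_conv)
  have eq: "gg q J x = (\<lambda>j. (if j = m then gg q J x j else 0) + (if j = m then 0 else gg q J x j))"
    by auto
  have "suminf (gg q J x) = gg q J x m + TT q J x"
    apply (subst eq)
    apply (subst suminf_add[symmetric])
    using sums_single[of m "gg q J x"] TT_summable[of J x]
    by (auto simp: TT_def m_def sums_iff)
  then show ?thesis using mJ by (simp add: gg_def m_def)
qed

lemma TT_nonneg: "0 \<le> TT q J x"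
  unfolding TT_def using gg_nonneg by (intro suminf_nonneg TT_summable) auto

lemma TT_mono: "x \<le> y \<Longrightarrow> TT q J y \<le> TT q J x"
  unfolding TT_def using gg_mono by (intro suminf_le TT_summable) auto

lemma TT_le:
  assumes "J \<noteq> {}"
  shows "TT q J x \<le> q powr (x + real (LEAST j. j \<in> J) + 1) / (1 - q)"
proof -
  define m where "m = (LEAST j. j \<in> J)"
  define k where "k j = (if j < Suc m then 0 else q powr (x + real j))" for j
  have "(\<lambda>i. q powr (x + real m + 1) * q ^ i) sums (q powr (x + real m + 1) * (1 / (1 - q)))"
    using q0 q1 by (intro sums_mult geometric_sums) auto
  moreover have "k (i + Suc m) = q powr (x + real m + 1) * q ^ i" for i
    using q0 by (simp add: k_def powr_add powr_realpow[symmetric] algebra_simps)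
  ultimately have "(\<lambda>i. k (i + Suc m)) sums (q powr (x + real m + 1) / (1 - q))" by simp
  then have ks: "k sums (q powr (x + real m + 1) / (1 - q))"
    by (subst (asm) sums_iff_shift) (simp add: k_def)
  have "TT q J x \<le> suminf k"
    unfolding TT_def
  proof (rule suminf_le[OF _ TT_summable sums_summable[OF ks]])
    fix j
    show "(if j = (LEAST j. j \<in> J) then 0 else gg q J x j) \<le> k j"
    proof (cases "j \<in> J \<and> j \<noteq> m")
      case True
      then have "m < j" unfolding m_def by (metis Least_le le_neq_implies_less)
      then show ?thesis using True q0 by (auto simp: k_def gg_def m_def intro: ln_add_one_self_le_self)
    next
      case False
      then show ?thesis using q0 by (auto simp: k_def gg_def m_def)
    qed
  qed
  then show ?thesis using ks by (simp add: sums_iff m_def)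
qed

definition "PP J x = (\<Prod>j. if j \<in> J then 1 / (1 + q powr (x + real j)) else 1)"

lemma qpos: "0 < 1 + q powr y" using q0 by (smt (verit) powr_ge_zero)

lemma PP_formula:
  assumes "J \<noteq> {}"
  shows "PP J x = exp (- TT q J x) / (1 + q powr (x + real (LEAST j. j \<in> J)))"
  using qpos[of "x + real (LEAST j. j \<in> J)"]
  by (simp add: PP_def prod_eq suminf_split[OF assms] exp_diff exp_minus divide_inverse)

lemma PP_bounds:
  assumes "J \<noteq> {}" "x \<le> y"
  shows "0 \<le> PP J x \<and> PP J x \<le> PP J y \<and> PP J y \<le> 1"
proof -
  define m where "m = (LEAST j. j \<in> J)"
  have a: "q powr (y + real m) \<le> q powr (x + real m)" using assms q0 q1 by (intro powr_mono') auto
  have b: "exp (- TT q J x) \<le> exp (- TT q J y)" using TT_mono[OF assms(2)] by simp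
  have c: "exp (- TT q J y) \<le> 1" using TT_nonneg by simp
  have "exp (- TT q J x) / (1 + q powr (x + real m)) \<le> exp (- TT q J y) / (1 + q powr (y + real m))"
    using a b qpos by (intro frac_le) auto
  moreover have "exp (- TT q J y) / (1 + q powr (y + real m)) \<le> 1"
  proof -
    have "exp (- TT q J y) \<le> 1 + q powr (y + real m)" using c powr_ge_zero[of q "y + real m"] by linarith
    then show ?thesis using qpos[of "y + real m"] by (simp add: divide_le_eq)
  qed
  ultimately show ?thesis using PP_formula[OF assms(1)] qpos by (simp add: m_def)
qed

lemma PP_upper:
  assumes "J \<noteq> {}"
  shows "PP J x \<le> 1 / (1 + q powr (x + real (LEAST j. j \<in> J)))"
  using PP_formula[OF assms] TT_nonneg[of J x] qpos[of "x + real (LEAST j. j \<in> J)"]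
  by (simp add: divide_right_mono)

lemma PP_lower:
  assumes "J \<noteq> {}"
  shows "PP J x \<ge> 1 - q powr (x + real (LEAST j. j \<in> J)) / (1 - q)"
proof -
  define m where "m = (LEAST j. j \<in> J)"
  define a where "a = q powr (x + real m)"
  have a0: "0 \<le> a" by (simp add: a_def)
  have qa: "q powr (x + real m + 1) = q * a" using q0 by (simp add: a_def powr_add)
  have T: "TT q J x \<le> q * a / (1 - q)" using TT_le[OF assms, of x] qa by (simp add: m_def)
  have e1: "exp (- (q * a / (1 - q))) \<le> exp (- TT q J x)" using T by simp
  have e2: "exp (- a) \<le> 1 / (1 + a)"
    using a0 exp_ge_add_one_self[of a] by (simp add: exp_minus divide_simps)
  have "exp (- (a / (1 - q))) = exp (- (q * a / (1 - q))) * exp (- a)"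
    using q1 by (simp add: exp_add[symmetric] field_simps)
  also have "\<dots> \<le> exp (- TT q J x) * (1 / (1 + a))"
    using e1 e2 by (intro mult_mono) auto
  also have "\<dots> = PP J x" using PP_formula[OF assms] by (simp add: a_def m_def)
  finally have "exp (- (a / (1 - q))) \<le> PP J x" .
  moreover have "1 - a / (1 - q) \<le> exp (- (a / (1 - q)))"
    using exp_ge_add_one_self[of "- (a / (1 - q))"] by simp
  ultimately show ?thesis by (simp add: a_def m_def)
qed

definition "c0 = exp (- 1 / (1 - q)) * (1 - q) / (2 * (1 + 1 / q))"

lemma c0_pos: "0 < c0" using q0 q1 unfolding c0_def by (intro divide_pos_pos mult_pos_pos add_pos_pos) auto

lemma PP_jump:
  assumes "J \<noteq> {}" "-1 \<le> x + real (LEAST j. j \<in> J)" "x + real (LEAST j. j \<in> J) < 0"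
  shows "PP J (x + 1) - PP J x \<ge> c0"
proof -
  define m where "m = (LEAST j. j \<in> J)"
  define a where "a = q powr (x + real m)"
  have qa: "q powr (x + 1 + real m) = q * a" using q0 by (simp add: a_def powr_add algebra_simps)
  have a1: "1 \<le> a" using powr_mono'[of "x + real m" 0 q] assms q0 q1 by (simp add: a_def m_def)
  have a2: "a \<le> 1 / q" using powr_mono'[of "-1" "x + real m" q] assms q0 q1
    by (simp add: a_def m_def powr_minus divide_inverse)
  have qa1: "q * a \<le> 1" using a2 q0 by (simp add: field_simps)
  define E where "E = exp (- TT q J x)"
  have T: "TT q J x \<le> q * a / (1 - q)"
    using TT_le[OF assms(1), of x] q0 by (simp add: a_def m_def powr_add mult.commute)
  have E1: "exp (- 1 / (1 - q)) \<le> E"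
  proof -
    have "q * a / (1 - q) \<le> 1 / (1 - q)" using qa1 q1 by (intro divide_right_mono) auto
    then show ?thesis using T unfolding E_def by simp
  qed
  have E2: "E \<le> exp (- TT q J (x + 1))" unfolding E_def using TT_mono[of x "x+1" J] by simp
  have P1: "PP J (x + 1) = exp (- TT q J (x + 1)) / (1 + q * a)"
    using PP_formula[OF assms(1), of "x+1"] qa by (simp add: m_def)
  have P0: "PP J x = E / (1 + a)" using PP_formula[OF assms(1), of x] by (simp add: E_def a_def m_def)
  have qa0: "0 \<le> q * a" using q0 a1 by simp
  have "PP J (x + 1) - PP J x \<ge> E / (1 + q * a) - E / (1 + a)"
    using P1 P0 E2 qa0 by (simp add: divide_right_mono)
  also have "E / (1 + q * a) - E / (1 + a) = E * (a * (1 - q) / ((1 + q * a) * (1 + a)))"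
    using qa0 a1 by (simp add: field_simps)
  finally have d: "PP J (x + 1) - PP J x \<ge> E * (a * (1 - q) / ((1 + q * a) * (1 + a)))" .
  have f: "(1 - q) / (2 * (1 + 1 / q)) \<le> a * (1 - q) / ((1 + q * a) * (1 + a))"
  proof (rule frac_le)
    show "0 \<le> a * (1 - q)" using a1 q1 by simp
    show "1 - q \<le> a * (1 - q)" using a1 q1 by simp
    show "0 < (1 + q * a) * (1 + a)" using a1 q0 by (intro mult_pos_pos add_pos_nonneg) auto
    show "(1 + q * a) * (1 + a) \<le> 2 * (1 + 1 / q)"
      using qa1 a2 qa0 a1 by (intro mult_mono) auto
  qed
  have "c0 \<le> E * (a * (1 - q) / ((1 + q * a) * (1 + a)))"
  proof -
    have "c0 = exp (- 1 / (1 - q)) * ((1 - q) / (2 * (1 + 1 / q)))" by (simp add: c0_def)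
    also have "\<dots> \<le> E * (a * (1 - q) / ((1 + q * a) * (1 + a)))"
      using E1 f q0 q1 by (intro mult_mono) (auto intro!: divide_nonneg_pos add_pos_pos simp: E_def)
    finally show ?thesis .
  qed
  with d show ?thesis by simp
qed

end


lemma squeeze:
  fixes a d :: "nat \<Rightarrow> real"
  assumes d: "d \<longlonglongrightarrow> 0" and d0: "\<forall>n\<ge>1. 0 \<le> d n"
    and H: "\<forall>\<epsilon>>0. \<exists>C\<ge>0. \<forall>n\<ge>1. 0 \<le> a n \<and> a n \<le> \<epsilon> + C * d n"
  shows "a \<longlonglongrightarrow> 0"
proof (rule LIMSEQ_I)
  fix r :: real assume r: "0 < r"
  obtain C where C: "C \<ge> 0" "\<forall>n\<ge>1. 0 \<le> a n \<and> a n \<le> r / 2 + C * d n"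
    using H r by (meson half_gt_zero)
  have "0 < r / (2 * (C + 1))" using r C by simp
  from LIMSEQ_D[OF d this] obtain no where no: "\<forall>n\<ge>no. norm (d n - 0) < r / (2 * (C + 1))" by blast
  show "\<exists>no. \<forall>n\<ge>no. norm (a n - 0) < r"
  proof (intro exI allI impI)
    fix n assume n: "max no 1 \<le> n"
    then have dn: "d n < r / (2 * (C + 1))" "0 \<le> d n" using no d0 by auto
    have "C * d n \<le> (C + 1) * d n" using dn by (simp add: algebra_simps)
    also have "\<dots> < (C + 1) * (r / (2 * (C + 1)))" using dn C by (intro mult_strict_left_mono) auto
    also have "\<dots> = r / 2" using C by (simp add: field_simps)
    finally show "norm (a n - 0) < r" using C(2) n by force
  qed
qed

context prob_space begin

context
  fixes \<eta> :: "nat \<Rightarrow> 'a \<Rightarrow> real" and \<phi> :: "nat \<Rightarrow> real \<Rightarrow> 'a \<Rightarrow> real" and F :: "nat \<Rightarrow> real \<Rightarrow> real"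
  assumes etam: "\<And>n. n \<ge> 1 \<Longrightarrow> \<eta> n \<in> borel_measurable M"
    and phim: "\<And>n x. n \<ge> 1 \<Longrightarrow> (\<lambda>\<omega>. \<phi> n x \<omega>) \<in> borel_measurable M"
    and mono: "\<forall>n\<ge>1. \<forall>\<omega>\<in>space M. \<forall>x y. x \<le> y \<longrightarrow>
            0 \<le> \<phi> n x \<omega> \<and> \<phi> n x \<omega> \<le> \<phi> n y \<omega> \<and> \<phi> n y \<omega> \<le> 1"
    and lo: "\<forall>\<epsilon>>0. \<exists>B. \<forall>n\<ge>1. \<forall>\<omega>\<in>space M. \<forall>x. \<eta> n \<omega> - x > B \<longrightarrow> \<phi> n x \<omega> < \<epsilon>"
    and hi: "\<forall>\<epsilon>>0. \<exists>B. \<forall>n\<ge>1. \<forall>\<omega>\<in>space M. \<forall>x. \<eta> n \<omega> - x < - B \<longrightarrow> \<phi> n x \<omega> > 1 - \<epsilon>"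
    and jump: "\<exists>c>0. \<forall>n\<ge>1. \<forall>\<omega>\<in>space M. \<forall>x. x < \<eta> n \<omega> \<and> \<eta> n \<omega> \<le> x + 1 \<longrightarrow>
            \<phi> n (x + 1) \<omega> - \<phi> n x \<omega> \<ge> c"
    and Fdef: "\<And>n x. F n x = (\<integral>\<omega>. \<phi> n x \<omega> \<partial>M)"
begin

lemma lo': "\<epsilon> > 0 \<Longrightarrow> \<exists>B\<ge>0. \<forall>n\<ge>1. \<forall>\<omega>\<in>space M. \<forall>x. \<eta> n \<omega> - x > B \<longrightarrow> \<phi> n x \<omega> < \<epsilon>"
proof -
  assume "\<epsilon> > 0"
  then obtain B where B: "\<forall>n\<ge>1. \<forall>\<omega>\<in>space M. \<forall>x. \<eta> n \<omega> - x > B \<longrightarrow> \<phi> n x \<omega> < \<epsilon>" using lo by blast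
  show ?thesis by (rule exI[of _ "max B 0"]) (use B in auto)
qed

lemma hi': "\<epsilon> > 0 \<Longrightarrow> \<exists>B\<ge>0. \<forall>n\<ge>1. \<forall>\<omega>\<in>space M. \<forall>x. \<eta> n \<omega> - x < - B \<longrightarrow> \<phi> n x \<omega> > 1 - \<epsilon>"
proof -
  assume "\<epsilon> > 0"
  then obtain B where B: "\<forall>n\<ge>1. \<forall>\<omega>\<in>space M. \<forall>x. \<eta> n \<omega> - x < - B \<longrightarrow> \<phi> n x \<omega> > 1 - \<epsilon>" using hi by blast
  show ?thesis by (rule exI[of _ "max B 0"]) (use B in auto)
qed

lemma phi01: "n \<ge> 1 \<Longrightarrow> \<omega> \<in> space M \<Longrightarrow> 0 \<le> \<phi> n x \<omega> \<and> \<phi> n x \<omega> \<le> 1"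
  using mono by (meson order_refl)

lemma phi_int: "n \<ge> 1 \<Longrightarrow> integrable M (\<lambda>\<omega>. \<phi> n x \<omega>)"
  by (rule integrable_const_bound[where B=1]) (use phi01 phim in auto)

lemma F01: "n \<ge> 1 \<Longrightarrow> 0 \<le> F n x \<and> F n x \<le> 1"
proof -
  assume n: "n \<ge> 1"
  have "0 \<le> F n x" unfolding Fdef using phi01[OF n] by (intro integral_nonneg_AE) auto
  moreover have "F n x \<le> (\<integral>\<omega>. 1 \<partial>M)" unfolding Fdef using phi01[OF n]
    by (intro integral_mono_AE phi_int[OF n]) auto
  ultimately show ?thesis by (simp add: prob_space)
qed

abbreviation "Dn n \<equiv> (SUP y. measure M {\<omega> \<in> space M. y < \<eta> n \<omega> \<and> \<eta> n \<omega> \<le> y + 1})"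

lemma D_upper: "n \<ge> 1 \<Longrightarrow> measure M {\<omega> \<in> space M. y < \<eta> n \<omega> \<and> \<eta> n \<omega> \<le> y + 1} \<le> Dn n"
  by (rule cSUP_upper) (auto intro!: bdd_aboveI2[where M=1])

lemma D_nonneg: "n \<ge> 1 \<Longrightarrow> 0 \<le> Dn n"
  using D_upper[of n 0] measure_nonneg[of M] by (meson order_trans)

lemma interval:
  assumes n: "n \<ge> 1"
  shows "measure M {\<omega> \<in> space M. x < \<eta> n \<omega> \<and> \<eta> n \<omega> \<le> x + real N} \<le> real N * Dn n"
proof (induction N)
  case 0
  have "{\<omega> \<in> space M. x < \<eta> n \<omega> \<and> \<eta> n \<omega> \<le> x + real 0} = {}" by auto
  then show ?case by (simp only:) simp
next
  case (Suc N)
  have [measurable]: "\<eta> n \<in> borel_measurable M" using etam n .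
  have "{\<omega> \<in> space M. x < \<eta> n \<omega> \<and> \<eta> n \<omega> \<le> x + real (Suc N)} \<subseteq>
      {\<omega> \<in> space M. x < \<eta> n \<omega> \<and> \<eta> n \<omega> \<le> x + real N} \<union>
      {\<omega> \<in> space M. (x + real N) < \<eta> n \<omega> \<and> \<eta> n \<omega> \<le> (x + real N) + 1}" by auto
  then have "measure M {\<omega> \<in> space M. x < \<eta> n \<omega> \<and> \<eta> n \<omega> \<le> x + real (Suc N)} \<le>
      measure M ({\<omega> \<in> space M. x < \<eta> n \<omega> \<and> \<eta> n \<omega> \<le> x + real N} \<union>
      {\<omega> \<in> space M. (x + real N) < \<eta> n \<omega> \<and> \<eta> n \<omega> \<le> (x + real N) + 1})"
    by (intro finite_measure_mono) measurable
  also have "\<dots> \<le> measure M {\<omega> \<in> space M. x < \<eta> n \<omega> \<and> \<eta> n \<omega> \<le> x + real N} +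
      measure M {\<omega> \<in> space M. (x + real N) < \<eta> n \<omega> \<and> \<eta> n \<omega> \<le> (x + real N) + 1}"
    by (intro measure_Un_le) measurable
  also have "\<dots> \<le> real N * Dn n + Dn n" using Suc.IH D_upper[OF n] by (intro add_mono) auto
  finally show ?case by (simp add: algebra_simps)
qed

lemma interval2:
  assumes n: "n \<ge> 1" and ab: "a \<le> b"
  shows "measure M {\<omega> \<in> space M. a \<le> \<eta> n \<omega> \<and> \<eta> n \<omega> \<le> b} \<le> (b - a + 2) * Dn n"
proof -
  have [measurable]: "\<eta> n \<in> borel_measurable M" using etam n .
  define N where "N = nat \<lceil>b - a\<rceil> + 1"
  have N1: "b \<le> a - 1 + real N" unfolding N_def using ab by linarith
  have N2: "real N \<le> b - a + 2" unfolding N_def using ab by linarith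
  have "measure M {\<omega> \<in> space M. a \<le> \<eta> n \<omega> \<and> \<eta> n \<omega> \<le> b}
      \<le> measure M {\<omega> \<in> space M. a - 1 < \<eta> n \<omega> \<and> \<eta> n \<omega> \<le> (a - 1) + real N}"
    using N1 by (intro finite_measure_mono) (auto, measurable)
  also have "\<dots> \<le> real N * Dn n" by (rule interval[OF n])
  also have "\<dots> \<le> (b - a + 2) * Dn n" using N2 D_nonneg[OF n] by (intro mult_right_mono) auto
  finally show ?thesis .
qed

lemma F_mono: "n \<ge> 1 \<Longrightarrow> x \<le> y \<Longrightarrow> F n x \<le> F n y"
  unfolding Fdef using mono by (intro integral_mono phi_int) auto

lemma ind_int: "A \<in> sets M \<Longrightarrow> integrable M (indicator A :: 'a \<Rightarrow> real)"
  using emeasure_finite[of A] by (intro integrable_real_indicator) (auto simp: less_top[symmetric])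

lemma F_diff_bound:
  assumes n: "n \<ge> 1" and e: "\<epsilon> > 0" and B1: "B1 \<ge> 0" "\<forall>n\<ge>1. \<forall>\<omega>\<in>space M. \<forall>x. \<eta> n \<omega> - x > B1 \<longrightarrow> \<phi> n x \<omega> < \<epsilon>"
    and B2: "B2 \<ge> 0" "\<forall>n\<ge>1. \<forall>\<omega>\<in>space M. \<forall>x. \<eta> n \<omega> - x < - B2 \<longrightarrow> \<phi> n x \<omega> > 1 - \<epsilon>"
  shows "F n (x + 1) - F n x \<le> \<epsilon> + (B1 + B2 + 3) * Dn n"
proof -
  have [measurable]: "\<eta> n \<in> borel_measurable M" using etam n .
  define S where "S = {\<omega> \<in> space M. x - B2 \<le> \<eta> n \<omega> \<and> \<eta> n \<omega> \<le> x + 1 + B1}"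
  have S[measurable]: "S \<in> sets M" unfolding S_def by measurable
  have pw: "\<phi> n (x + 1) \<omega> - \<phi> n x \<omega> \<le> \<epsilon> + indicator S \<omega>" if w: "\<omega> \<in> space M" for \<omega>
  proof -
    have a: "0 \<le> \<phi> n x \<omega>" "\<phi> n x \<omega> \<le> \<phi> n (x+1) \<omega>" "\<phi> n (x+1) \<omega> \<le> 1"
      using mono n w by auto
    consider "\<eta> n \<omega> - (x + 1) > B1" | "\<eta> n \<omega> - x < - B2" | "\<omega> \<in> S"
      unfolding S_def using w by force
    then show ?thesis
    proof cases
      case 1 then have "\<phi> n (x+1) \<omega> < \<epsilon>" using B1 n w by blast
      then show ?thesis using a by (simp add: indicator_def)
    next
      case 2 then have "\<phi> n x \<omega> > 1 - \<epsilon>" using B2 n w by blast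
      then show ?thesis using a by (simp add: indicator_def)
    next
      case 3 then show ?thesis using a e by simp
    qed
  qed
  have "F n (x + 1) - F n x = (\<integral>\<omega>. \<phi> n (x + 1) \<omega> - \<phi> n x \<omega> \<partial>M)"
    unfolding Fdef by (simp add: Bochner_Integration.integral_diff phi_int[OF n])
  also have "\<dots> \<le> (\<integral>\<omega>. \<epsilon> + indicator S \<omega> \<partial>M)"
    using pw by (intro integral_mono Bochner_Integration.integrable_diff phi_int n
      Bochner_Integration.integrable_add ind_int S) auto
  also have "\<dots> = \<epsilon> + measure M S"
    using S ind_int[OF S] by (simp add: Bochner_Integration.integral_add prob_space Int_absorb2 sets.sets_into_space)
  also have "measure M S \<le> (x + 1 + B1 - (x - B2) + 2) * Dn n"
    unfolding S_def using B1 B2 by (intro interval2 n) auto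
  finally show ?thesis by (simp add: algebra_simps)
qed

lemma partA: "spreads_rv M \<eta> \<Longrightarrow> spreads_fun F"
  unfolding spreads_rv_def spreads_fun_def
proof (rule squeeze[where d = Dn])
  show "\<forall>n\<ge>1. 0 \<le> Dn n" using D_nonneg by auto
  show "\<forall>\<epsilon>>0. \<exists>C\<ge>0. \<forall>n\<ge>1. 0 \<le> (SUP x. F n (x + 1) - F n x) \<and> (SUP x. F n (x + 1) - F n x) \<le> \<epsilon> + C * Dn n"
  proof (intro allI impI)
    fix \<epsilon> :: real assume e: "\<epsilon> > 0"
    obtain B1 where B1: "B1 \<ge> 0" "\<forall>n\<ge>1. \<forall>\<omega>\<in>space M. \<forall>x. \<eta> n \<omega> - x > B1 \<longrightarrow> \<phi> n x \<omega> < \<epsilon>"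
      using lo'[OF e] by blast
    obtain B2 where B2: "B2 \<ge> 0" "\<forall>n\<ge>1. \<forall>\<omega>\<in>space M. \<forall>x. \<eta> n \<omega> - x < - B2 \<longrightarrow> \<phi> n x \<omega> > 1 - \<epsilon>"
      using hi'[OF e] by blast
    show "\<exists>C\<ge>0. \<forall>n\<ge>1. 0 \<le> (SUP x. F n (x + 1) - F n x) \<and> (SUP x. F n (x + 1) - F n x) \<le> \<epsilon> + C * Dn n"
    proof (intro exI conjI allI impI)
      show "0 \<le> B1 + B2 + 3" using B1 B2 by simp
      fix n :: nat assume n: "n \<ge> 1"
      have bd: "F n (x + 1) - F n x \<le> \<epsilon> + (B1 + B2 + 3) * Dn n" for x
        by (rule F_diff_bound[OF n e B1 B2])
      have "0 \<le> F n (0 + 1) - F n 0" using F_mono[OF n, of 0 1] by simp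
      also have "\<dots> \<le> (SUP x. F n (x + 1) - F n x)"
        by (rule cSUP_upper) (auto intro!: bdd_aboveI2 bd)
      finally show "0 \<le> (SUP x. F n (x + 1) - F n x)" .
      show "(SUP x. F n (x + 1) - F n x) \<le> \<epsilon> + (B1 + B2 + 3) * Dn n"
        using bd by (intro cSUP_least) (auto simp: mult.commute)
    qed
  qed
qed

lemma En_upper: "n \<ge> 1 \<Longrightarrow> F n (y + 1) - F n y \<le> (SUP x. F n (x + 1) - F n x)"
proof -
  assume n: "n \<ge> 1"
  have "F n (x + 1) - F n x \<le> 1" for x using F01[OF n, of x] F01[OF n, of "x+1"] by linarith
  then show ?thesis by (intro cSUP_upper bdd_aboveI2[where M=1]) auto
qed

lemma partB: "spreads_fun F \<Longrightarrow> spreads_rv M \<eta>"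
  unfolding spreads_rv_def spreads_fun_def
proof (rule squeeze[where d = "\<lambda>n. SUP x. F n (x + 1) - F n x"])
  show "\<forall>n\<ge>1. 0 \<le> (SUP x. F n (x + 1) - F n x)"
    using En_upper[of _ 0] F_mono[of _ 0 1] by (smt (verit))
  obtain c where c: "c > 0" "\<forall>n\<ge>1. \<forall>\<omega>\<in>space M. \<forall>x. x < \<eta> n \<omega> \<and> \<eta> n \<omega> \<le> x + 1 \<longrightarrow>
            \<phi> n (x + 1) \<omega> - \<phi> n x \<omega> \<ge> c" using jump by blast
  show "\<forall>\<epsilon>>0. \<exists>C\<ge>0. \<forall>n\<ge>1. 0 \<le> Dn n \<and> Dn n \<le> \<epsilon> + C * (SUP x. F n (x + 1) - F n x)"
  proof (intro allI impI exI conjI)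
    fix \<epsilon> :: real assume e: "\<epsilon> > 0"
    show "0 \<le> 1 / c" using c by simp
    fix n :: nat assume n: "n \<ge> 1"
    show "0 \<le> Dn n" using D_nonneg[OF n] .
    have [measurable]: "\<eta> n \<in> borel_measurable M" using etam n .
    have bd: "measure M {\<omega> \<in> space M. x < \<eta> n \<omega> \<and> \<eta> n \<omega> \<le> x + 1} \<le> 1 / c * (SUP x. F n (x + 1) - F n x)" for x
    proof -
      define A where "A = {\<omega> \<in> space M. x < \<eta> n \<omega> \<and> \<eta> n \<omega> \<le> x + 1}"
      have A[measurable]: "A \<in> sets M" unfolding A_def by measurable
      have "c * measure M A = (\<integral>\<omega>. c * indicator A \<omega> \<partial>M)"
        using A by (simp add: Int_absorb2 sets.sets_into_space)
      also have "\<dots> \<le> (\<integral>\<omega>. \<phi> n (x + 1) \<omega> - \<phi> n x \<omega> \<partial>M)"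
      proof (intro integral_mono Bochner_Integration.integrable_diff phi_int n integrable_mult_right ind_int A)
        fix \<omega> assume w: "\<omega> \<in> space M"
        show "c * indicator A \<omega> \<le> \<phi> n (x + 1) \<omega> - \<phi> n x \<omega>"
          using c n w mono by (auto simp: A_def indicator_def)
      qed
      also have "\<dots> = F n (x + 1) - F n x"
        unfolding Fdef by (simp add: Bochner_Integration.integral_diff phi_int[OF n])
      also have "\<dots> \<le> (SUP x. F n (x + 1) - F n x)" by (rule En_upper[OF n])
      finally show ?thesis unfolding A_def using c by (simp add: field_simps mult.commute)
    qed
    have "Dn n \<le> 1 / c * (SUP x. F n (x + 1) - F n x)"
      using bd by (intro cSUP_least) auto
    then show "Dn n \<le> \<epsilon> + 1 / c * (SUP x. F n (x + 1) - F n x)" using e by simp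
  qed
qed

lemma G_minus_F_upper:
  assumes n: "n \<ge> 1" and e: "\<epsilon> > 0"
    and B2: "B2 \<ge> 0" "\<forall>n\<ge>1. \<forall>\<omega>\<in>space M. \<forall>x. \<eta> n \<omega> - x < - B2 \<longrightarrow> \<phi> n x \<omega> > 1 - \<epsilon>"
  shows "measure M {\<omega> \<in> space M. \<eta> n \<omega> \<le> x} - F n x \<le> \<epsilon> + (B2 + 2) * Dn n"
proof -
  have [measurable]: "\<eta> n \<in> borel_measurable M" using etam n .
  define S where "S = {\<omega> \<in> space M. x - B2 \<le> \<eta> n \<omega> \<and> \<eta> n \<omega> \<le> x}"
  have S[measurable]: "S \<in> sets M" unfolding S_def by measurable
  define A where "A = {\<omega> \<in> space M. \<eta> n \<omega> \<le> x}"
  have A[measurable]: "A \<in> sets M" unfolding A_def by measurable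
  have pw: "indicator A \<omega> - \<phi> n x \<omega> \<le> \<epsilon> + indicator S \<omega>" if w: "\<omega> \<in> space M" for \<omega>
  proof -
    have a: "0 \<le> \<phi> n x \<omega>" "\<phi> n x \<omega> \<le> 1" using phi01 n w by auto
    consider "\<eta> n \<omega> - x < - B2" | "\<eta> n \<omega> > x" | "\<omega> \<in> S"
      unfolding S_def using w by force
    then show ?thesis
    proof cases
      case 1 then have "\<phi> n x \<omega> > 1 - \<epsilon>" using B2 n w by blast
      then show ?thesis using a by (simp add: indicator_def)
    next
      case 2 then show ?thesis using a e by (simp add: indicator_def A_def)
    next
      case 3 then show ?thesis using a e by (simp add: indicator_def)
    qed
  qed
  have "measure M A - F n x = (\<integral>\<omega>. indicator A \<omega> - \<phi> n x \<omega> \<partial>M)"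
    unfolding Fdef using A ind_int[OF A]
    by (simp add: Bochner_Integration.integral_diff phi_int[OF n] Int_absorb2 sets.sets_into_space)
  also have "\<dots> \<le> (\<integral>\<omega>. \<epsilon> + indicator S \<omega> \<partial>M)"
    using pw by (intro integral_mono Bochner_Integration.integrable_diff phi_int n
      Bochner_Integration.integrable_add ind_int S A) auto
  also have "\<dots> = \<epsilon> + measure M S"
    using S ind_int[OF S] by (simp add: Bochner_Integration.integral_add prob_space Int_absorb2 sets.sets_into_space)
  also have "measure M S \<le> (x - (x - B2) + 2) * Dn n"
    unfolding S_def using B2 by (intro interval2 n) auto
  finally show ?thesis by (simp add: algebra_simps A_def)
qed

lemma G_minus_F_lower:
  assumes n: "n \<ge> 1" and d: "\<delta> > 0"
  shows "\<exists>x. measure M {\<omega> \<in> space M. \<eta> n \<omega> \<le> x} - F n x \<ge> - \<delta>"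
proof -
  have [measurable]: "\<eta> n \<in> borel_measurable M" using etam n .
  have d2: "\<delta> / 2 > 0" using d by simp
  obtain B1 where B1: "B1 \<ge> 0" "\<forall>n\<ge>1. \<forall>\<omega>\<in>space M. \<forall>x. \<eta> n \<omega> - x > B1 \<longrightarrow> \<phi> n x \<omega> < \<delta> / 2"
    using lo'[OF d2] by blast
  define A where "A k = {\<omega> \<in> space M. \<eta> n \<omega> \<le> - real k}" for k :: nat
  have Am: "range A \<subseteq> sets M" unfolding A_def by auto
  have Ad: "decseq A" unfolding A_def decseq_def by auto
  have "(\<Inter>i. A i) = {}"
  proof -
    have "\<omega> \<notin> A (nat \<lceil>- \<eta> n \<omega>\<rceil> + 1)" for \<omega>
    proof -
      have "- \<eta> n \<omega> \<le> real (nat \<lceil>- \<eta> n \<omega>\<rceil>)" by linarith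
      then show ?thesis unfolding A_def by auto
    qed
    then show ?thesis by blast
  qed
  then have "(\<lambda>k. measure M (A k)) \<longlonglongrightarrow> 0"
    using finite_Lim_measure_decseq[OF Am Ad] by simp
  from order_tendstoD(2)[OF this d2] obtain k where k: "measure M (A k) < \<delta> / 2"
    by (auto simp: eventually_sequentially)
  define x where "x = - real k - B1"
  have Ak[measurable]: "A k \<in> sets M" using Am by auto
  have pw: "\<phi> n x \<omega> \<le> \<delta> / 2 + indicator (A k) \<omega>" if w: "\<omega> \<in> space M" for \<omega>
  proof (cases "\<eta> n \<omega> - x > B1")
    case True then show ?thesis using B1 n w d by (smt (verit) indicator_pos_le)
  next
    case False then have "\<omega> \<in> A k" using w unfolding A_def x_def by auto
    then show ?thesis using phi01[OF n w, of x] d by simp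
  qed
  have "F n x \<le> (\<integral>\<omega>. \<delta> / 2 + indicator (A k) \<omega> \<partial>M)"
    unfolding Fdef using pw by (intro integral_mono phi_int n Bochner_Integration.integrable_add ind_int Ak) auto
  also have "\<dots> = \<delta> / 2 + measure M (A k)"
    using Ak ind_int[OF Ak] by (simp add: Bochner_Integration.integral_add prob_space Int_absorb2 sets.sets_into_space)
  finally have "F n x < \<delta>" using k by simp
  then show ?thesis using measure_nonneg[of M] by (intro exI[of _ x]) (smt (verit))
qed

lemma partC: "spreads_rv M \<eta> \<Longrightarrow> (\<lambda>n. SUP x::real. measure M {\<omega> \<in> space M. \<eta> n \<omega> \<le> x} - F n x) \<longlonglongrightarrow> 0"
  unfolding spreads_rv_def
proof (rule squeeze[where d = Dn])
  show "\<forall>n\<ge>1. 0 \<le> Dn n" using D_nonneg by auto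
  show "\<forall>\<epsilon>>0. \<exists>C\<ge>0. \<forall>n\<ge>1. 0 \<le> (SUP x::real. measure M {\<omega> \<in> space M. \<eta> n \<omega> \<le> x} - F n x) \<and>
      (SUP x::real. measure M {\<omega> \<in> space M. \<eta> n \<omega> \<le> x} - F n x) \<le> \<epsilon> + C * Dn n"
  proof (intro allI impI)
    fix \<epsilon> :: real assume e: "\<epsilon> > 0"
    obtain B2 where B2: "B2 \<ge> 0" "\<forall>n\<ge>1. \<forall>\<omega>\<in>space M. \<forall>x. \<eta> n \<omega> - x < - B2 \<longrightarrow> \<phi> n x \<omega> > 1 - \<epsilon>"
      using hi'[OF e] by blast
    show "\<exists>C\<ge>0. \<forall>n\<ge>1. 0 \<le> (SUP x::real. measure M {\<omega> \<in> space M. \<eta> n \<omega> \<le> x} - F n x) \<and>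
      (SUP x::real. measure M {\<omega> \<in> space M. \<eta> n \<omega> \<le> x} - F n x) \<le> \<epsilon> + C * Dn n"
    proof (intro exI conjI allI impI)
      show "0 \<le> B2 + 2" using B2 by simp
      fix n :: nat assume n: "n \<ge> 1"
      have bd: "measure M {\<omega> \<in> space M. \<eta> n \<omega> \<le> x} - F n x \<le> 1" for x
        using F01[OF n, of x] by (smt (verit) prob_le_1)
      show "0 \<le> (SUP x::real. measure M {\<omega> \<in> space M. \<eta> n \<omega> \<le> x} - F n x)"
      proof (rule field_le_epsilon)
        fix \<delta> :: real assume d: "0 < \<delta>"
        obtain x where x: "measure M {\<omega> \<in> space M. \<eta> n \<omega> \<le> x} - F n x \<ge> - \<delta>"
          using G_minus_F_lower[OF n d] by blast
        also have "\<dots> \<le> (SUP x::real. measure M {\<omega> \<in> space M. \<eta> n \<omega> \<le> x} - F n x)"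
          by (rule cSUP_upper) (auto intro!: bdd_aboveI2 bd)
        finally show "0 \<le> (SUP x::real. measure M {\<omega> \<in> space M. \<eta> n \<omega> \<le> x} - F n x) + \<delta>" by simp
      qed
      show "(SUP x::real. measure M {\<omega> \<in> space M. \<eta> n \<omega> \<le> x} - F n x) \<le> \<epsilon> + (B2 + 2) * Dn n"
        by (rule cSUP_least) (auto intro: G_minus_F_upper[OF n e B2])
    qed
  qed
qed

lemma abstract_equiv: "asymp_equiv M \<eta> F"
  unfolding asymp_equiv_def using partA partB partC by blast

end
end

theorem corollary5p7:
  fixes M :: "'a measure" and q :: real and J :: "nat \<Rightarrow> 'a \<Rightarrow> nat set"
    and \<eta> :: "nat \<Rightarrow> 'a \<Rightarrow> real" and \<phi> :: "nat \<Rightarrow> real \<Rightarrow> 'a \<Rightarrow> real"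
    and F :: "nat \<Rightarrow> real \<Rightarrow> real"
  assumes "prob_space M"
    and "0 < q" "q < 1"
    and meas: "\<And>n k. n \<ge> 1 \<Longrightarrow> {\<omega> \<in> space M. k \<in> J n \<omega>} \<in> sets M"
    and nonempty: "\<And>n \<omega>. n \<ge> 1 \<Longrightarrow> \<omega> \<in> space M \<Longrightarrow> J n \<omega> \<noteq> {}"
    and eta_def: "\<And>n \<omega>. \<eta> n \<omega> = - real (LEAST j. j \<in> J n \<omega>)"
    and phi_def: "\<And>n x \<omega>. \<phi> n x \<omega> =
        (\<Prod>j. if j \<in> J n \<omega> then 1 / (1 + q powr (x + real j)) else 1)"
    and F_def: "\<And>n x. F n x = (\<integral>\<omega>. \<phi> n x \<omega> \<partial>M)"
  shows "(\<forall>n\<ge>1. \<forall>\<omega>\<in>space M. \<forall>x y. x \<le> y \<longrightarrow>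
            0 \<le> \<phi> n x \<omega> \<and> \<phi> n x \<omega> \<le> \<phi> n y \<omega> \<and> \<phi> n y \<omega> \<le> 1)
       \<and> (\<forall>\<epsilon>>0. \<exists>B. \<forall>n\<ge>1. \<forall>\<omega>\<in>space M. \<forall>x. \<eta> n \<omega> - x > B \<longrightarrow> \<phi> n x \<omega> < \<epsilon>)
       \<and> (\<forall>\<epsilon>>0. \<exists>B. \<forall>n\<ge>1. \<forall>\<omega>\<in>space M. \<forall>x. \<eta> n \<omega> - x < - B \<longrightarrow> \<phi> n x \<omega> > 1 - \<epsilon>)
       \<and> (\<exists>c>0. \<forall>n\<ge>1. \<forall>\<omega>\<in>space M. \<forall>x. x < \<eta> n \<omega> \<and> \<eta> n \<omega> \<le> x + 1 \<longrightarrow>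
            \<phi> n (x + 1) \<omega> - \<phi> n x \<omega> \<ge> c)
       \<and> asymp_equiv M \<eta> F"
proof -
  interpret prob_space M by (rule assms(1))
  have q0: "0 < q" and q1: "q < 1" using assms by auto
  have phiPP: "\<phi> n x \<omega> = PP q (J n \<omega>) x" for n x \<omega>
    by (simp add: phi_def PP_def[OF q0 q1])
  have etaL: "\<eta> n \<omega> = - real (LEAST j. j \<in> J n \<omega>)" for n \<omega> by (rule eta_def)
  have P1: "\<forall>n\<ge>1. \<forall>\<omega>\<in>space M. \<forall>x y. x \<le> y \<longrightarrow>
            0 \<le> \<phi> n x \<omega> \<and> \<phi> n x \<omega> \<le> \<phi> n y \<omega> \<and> \<phi> n y \<omega> \<le> 1"
    using PP_bounds[OF q0 q1] nonempty by (simp add: phiPP)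
  have P2: "\<forall>\<epsilon>>0. \<exists>B. \<forall>n\<ge>1. \<forall>\<omega>\<in>space M. \<forall>x. \<eta> n \<omega> - x > B \<longrightarrow> \<phi> n x \<omega> < \<epsilon>"
  proof (intro allI impI)
    fix \<epsilon> :: real assume e: "\<epsilon> > 0"
    show "\<exists>B. \<forall>n\<ge>1. \<forall>\<omega>\<in>space M. \<forall>x. \<eta> n \<omega> - x > B \<longrightarrow> \<phi> n x \<omega> < \<epsilon>"
    proof (intro exI allI impI ballI)
      fix n :: nat and \<omega> x assume n: "n \<ge> 1" and w: "\<omega> \<in> space M" and h: "\<eta> n \<omega> - x > log q \<epsilon>"
      define s where "s = x + real (LEAST j. j \<in> J n \<omega>)"
      have s: "s < - log q \<epsilon>" using h by (simp add: s_def etaL)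
      have "q powr (- log q \<epsilon>) < q powr s" using powr_less_mono'[OF q0 q1 s] .
      also have "q powr (- log q \<epsilon>) = 1 / \<epsilon>" using q0 q1 e by (simp add: powr_minus divide_inverse)
      finally have qs: "1 / \<epsilon> < q powr s" .
      have "\<phi> n x \<omega> \<le> 1 / (1 + q powr s)"
        using PP_upper[OF q0 q1 nonempty[OF n w]] by (simp add: phiPP s_def)
      also have "\<dots> < \<epsilon>"
      proof -
        have "1 / \<epsilon> < 1 + q powr s" using qs by simp
        then have "1 < \<epsilon> * (1 + q powr s)" using e by (simp add: field_simps)
        then show ?thesis using e qpos[OF q0 q1, of s] by (simp add: field_simps)
      qed
      finally show "\<phi> n x \<omega> < \<epsilon>" .
    qed
  qed
  have P3: "\<forall>\<epsilon>>0. \<exists>B. \<forall>n\<ge>1. \<forall>\<omega>\<in>space M. \<forall>x. \<eta> n \<omega> - x < - B \<longrightarrow> \<phi> n x \<omega> > 1 - \<epsilon>"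
  proof (intro allI impI)
    fix \<epsilon> :: real assume e: "\<epsilon> > 0"
    have e1: "\<epsilon> * (1 - q) > 0" using e q1 by simp
    show "\<exists>B. \<forall>n\<ge>1. \<forall>\<omega>\<in>space M. \<forall>x. \<eta> n \<omega> - x < - B \<longrightarrow> \<phi> n x \<omega> > 1 - \<epsilon>"
    proof (intro exI allI impI ballI)
      fix n :: nat and \<omega> x assume n: "n \<ge> 1" and w: "\<omega> \<in> space M"
        and h: "\<eta> n \<omega> - x < - log q (\<epsilon> * (1 - q))"
      define s where "s = x + real (LEAST j. j \<in> J n \<omega>)"
      have s: "log q (\<epsilon> * (1 - q)) < s" using h by (simp add: s_def etaL)
      have "q powr s < q powr (log q (\<epsilon> * (1 - q)))" using powr_less_mono'[OF q0 q1 s] .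
      also have "\<dots> = \<epsilon> * (1 - q)" using q0 q1 e1 by simp
      finally have qs: "q powr s / (1 - q) < \<epsilon>" using q1 by (simp add: field_simps)
      have "1 - q powr s / (1 - q) \<le> \<phi> n x \<omega>"
        using PP_lower[OF q0 q1 nonempty[OF n w]] by (simp add: phiPP s_def)
      then show "\<phi> n x \<omega> > 1 - \<epsilon>" using qs by simp
    qed
  qed
  have P4: "\<exists>c>0. \<forall>n\<ge>1. \<forall>\<omega>\<in>space M. \<forall>x. x < \<eta> n \<omega> \<and> \<eta> n \<omega> \<le> x + 1 \<longrightarrow>
            \<phi> n (x + 1) \<omega> - \<phi> n x \<omega> \<ge> c"
  proof (intro exI conjI allI impI ballI)
    show "0 < c0 q" by (rule c0_pos[OF q0 q1])
    fix n :: nat and \<omega> x assume n: "n \<ge> 1" and w: "\<omega> \<in> space M"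
      and h: "x < \<eta> n \<omega> \<and> \<eta> n \<omega> \<le> x + 1"
    show "\<phi> n (x + 1) \<omega> - \<phi> n x \<omega> \<ge> c0 q"
      using PP_jump[OF q0 q1 nonempty[OF n w], of x] h by (simp add: phiPP etaL)
  qed
  have etam: "\<eta> n \<in> borel_measurable M" if n: "n \<ge> 1" for n
  proof -
    have Jm[measurable]: "Measurable.pred M (\<lambda>\<omega>. k \<in> J n \<omega>)" for k
      using meas[OF n, of k] by (simp add: Measurable.pred_def)
    have "(\<lambda>\<omega>. LEAST j. j \<in> J n \<omega>) \<in> measurable M (count_space UNIV)"
      unfolding measurable_count_space_eq2_countable
    proof (intro conjI ballI)
      fix k :: nat
      have "(\<lambda>\<omega>. LEAST j. j \<in> J n \<omega>) -` {k} \<inter> space M = {\<omega> \<in> space M. k \<in> J n \<omega> \<and> (\<forall>i. i < k \<longrightarrow> i \<notin> J n \<omega>)}"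
      proof (intro set_eqI iffI)
        fix \<omega> assume "\<omega> \<in> (\<lambda>\<omega>. LEAST j. j \<in> J n \<omega>) -` {k} \<inter> space M"
        then have w: "\<omega> \<in> space M" and L: "(LEAST j. j \<in> J n \<omega>) = k" by auto
        have "k \<in> J n \<omega>" using nonempty[OF n w] L by (metis LeastI ex_in_conv)
        moreover have "\<forall>i. i < k \<longrightarrow> i \<notin> J n \<omega>" using L not_less_Least by blast
        ultimately show "\<omega> \<in> {\<omega> \<in> space M. k \<in> J n \<omega> \<and> (\<forall>i. i < k \<longrightarrow> i \<notin> J n \<omega>)}" using w by auto
      next
        fix \<omega> assume "\<omega> \<in> {\<omega> \<in> space M. k \<in> J n \<omega> \<and> (\<forall>i. i < k \<longrightarrow> i \<notin> J n \<omega>)}"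
        then have "\<omega> \<in> space M" "k \<in> J n \<omega>" "\<forall>i. i < k \<longrightarrow> i \<notin> J n \<omega>" by auto
        then show "\<omega> \<in> (\<lambda>\<omega>. LEAST j. j \<in> J n \<omega>) -` {k} \<inter> space M"
          by (auto intro!: Least_equality simp: not_less[symmetric])
      qed
      also have "\<dots> \<in> sets M" by measurable
      finally show "(\<lambda>\<omega>. LEAST j. j \<in> J n \<omega>) -` {k} \<inter> space M \<in> sets M" .
    qed auto
    then have "(\<lambda>\<omega>. - real (LEAST j. j \<in> J n \<omega>)) \<in> borel_measurable M"
      by (rule measurable_compose) (rule borel_measurable_count_space)
    then show ?thesis by (simp add: etaL[abs_def])
  qed
  have phim: "(\<lambda>\<omega>. \<phi> n x \<omega>) \<in> borel_measurable M" if n: "n \<ge> 1" for n x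
  proof -
    have Jm[measurable]: "Measurable.pred M (\<lambda>\<omega>. k \<in> J n \<omega>)" for k
      using meas[OF n, of k] by (simp add: Measurable.pred_def)
    have "(\<lambda>\<omega>. exp (- suminf (\<lambda>j. gg q (J n \<omega>) x j))) \<in> borel_measurable M"
      unfolding gg_def by measurable
    moreover have "\<phi> n x \<omega> = exp (- suminf (\<lambda>j. gg q (J n \<omega>) x j))" for \<omega>
      using prod_eq[OF q0 q1] by (simp add: phi_def)
    ultimately show ?thesis by simp
  qed
  have AE: "asymp_equiv M \<eta> F"
    by (rule abstract_equiv[OF etam phim P1 P2 P3 P4 F_def])
  show ?thesis using P1 P2 P3 P4 AE by blast
qed

end
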